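(* Let $\chi\in\chi(G)$ be a character and $\lambda\in\Lambda^\chi$. Let $\mathcal M=\{i\in[n]:\langle\chi_i,\lambda\rangle\ge0\}$, and let $A_1,\dots,A_N$ be the subsets of $[n]$ that are minimal with respect to the property $L(A_j)\subset S^\chi_\lambda$. Then $$S^\chi_\lambda=V([n]\setminus\mathcal M)\cap\Big(\bigcup_{j=1}^N D(A_j)\Big)=X_\lambda\cap\Big(\bigcup_{j=1}^ND(A_j)\Big).$$ In particular $S^\chi_\lambda$ is an open subvariety of $X_\lambda$, irreducible, connected and smooth; it is obtained by removing a finite union of linear subspaces from $X_\lambda$, and its Zariski closure is the linear subspace $X_\lambda$.
   Context: $G$ is a diagonalizable algebraic group over $\mathbf C$ acting on $X=\mathbf A^n_{\mathbf C}$ by $g\cdot(x_1,\dots,x_n)=(\chi_1(g)x_1,\dots,\chi_n(g)x_n)$ for fixed characters $\chi_1,\dots,\chi_n$. $\chi(G)$ is the character group, $\Gamma(G)$ the group of one-parameter subgroups, $\langle\chi,\lambda\rangle$ defined by $\chi(\lambda(t))=t^{\langle\chi,\lambda\rangle}$ (extended to real scalars). A norm $\|\cdot\|$ on $\Gamma(G)$ is fixed, induced by an inner product on $\Gamma(G)_{\mathbf R}$ integral on $\Gamma(G)\times\Gamma(G)$. $[n]=\{1,\dots,n\}$. For $x\in X$, $S_x=\{i:x_i\ne0\}$ and $\sigma_x=\{v\in\Gamma(G)_{\mathbf R}:\langle\chi_i,v\rangle\ge0\ \forall i\in S_x\}$; the lattice points of $\sigma_x$ are exactly the $\lambda$ for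 which $\lim_{t\to0}\lambda(t)\cdot x$ exists. $X_\lambda=\{x:\lim_{t\to0}\lambda(t)x\text{ exists}\}=\{x:x_i=0\text{ whenever }\langle\chi_i,\lambda\rangle<0\}$. A point $x$ is $\chi$-unstable if there is $\lambda\in\Gamma(G)$ with $\lim_{t\to0}\lambda(t)x$ existing and $\langle\chi,\lambda\rangle<0$; $X^{us}(\chi)$ is the unstable locus. For $x\in X^{us}(\chi)$ let $\lambda_{\chi,x}$ be the unique indivisible $\lambda\in\Gamma(G)$ with limit existing minimizing $\langle\chi,\lambda\rangle/\|\lambda\|$ over all nonzero such $\lambda$ (Kempf). $\Lambda^\chi=\{\lambda_{\chi,x}:x\in X^{us}(\chi)\}$, $S^\chi_\lambda=\{x\in X^{us}(\chi):\lambda_{\chi,x}=\lambda\}$. For $S\subset[n]$: $V(S)=\{x:x_i=0\ \forall i\in S\}$, $D(S)=\{x:\prod_{i\in S}x_i\ne0\}$, $L(S)=D(S)\cap V([n]\setminus S)$. *)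

theory Defs
  imports "HOL-Analysis.Analysis"
begin

text \<open>A diagonalizable group G with torus part of rank r: the lattice
Gamma(G) of one-parameter subgroups is int^'r; a character is recorded via its
pairing with Gamma(G), i.e. as an element of int^'r (the dual lattice); the pairing
is the dot product. The coordinates of X = A^n are indexed by the finite type 'n
(so [n] = UNIV).\<close>

definition pair :: "int^'r::finite \<Rightarrow> int^'r \<Rightarrow> int" where
  "pair c l = (\<Sum>k\<in>UNIV. c$k * l$k)"

definition act :: "('n::finite \<Rightarrow> int^'r::finite) \<Rightarrow> int^'r \<Rightarrow> complex \<Rightarrow> complex^'n \<Rightarrow> complex^'n" where
  "act chis l t x = (\<chi> i. t powi (pair (chis i) l) * x$i)"

definition lim_exists :: "('n::finite \<Rightarrow> int^'r::finite) \<Rightarrow> int^'r \<Rightarrow> complex^'n \<Rightarrow> bool" where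
  "lim_exists chis l x \<longleftrightarrow> (\<exists>L. ((\<lambda>t. act chis l t x) \<longlongrightarrow> L) (at 0))"

definition X_lam :: "('n::finite \<Rightarrow> int^'r::finite) \<Rightarrow> int^'r \<Rightarrow> (complex^'n) set" where
  "X_lam chis l = {x. lim_exists chis l x}"

definition inner_ok :: "int^'r::finite^'r \<Rightarrow> bool" where
  "inner_ok B \<longleftrightarrow> (\<forall>i j. B$i$j = B$j$i) \<and>
     (\<forall>v::real^'r. v \<noteq> 0 \<longrightarrow> (\<Sum>i\<in>UNIV. \<Sum>j\<in>UNIV. v$i * of_int (B$i$j) * v$j) > 0)"

definition lnorm :: "int^'r::finite^'r \<Rightarrow> int^'r \<Rightarrow> real" where
  "lnorm B l = sqrt (\<Sum>i\<in>UNIV. \<Sum>j\<in>UNIV. of_int (l$i * B$i$j * l$j))"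

definition unstable :: "('n::finite \<Rightarrow> int^'r::finite) \<Rightarrow> int^'r \<Rightarrow> complex^'n \<Rightarrow> bool" where
  "unstable chis c x \<longleftrightarrow> (\<exists>l. lim_exists chis l x \<and> pair c l < 0)"

definition indivisible :: "int^'r::finite \<Rightarrow> bool" where
  "indivisible l \<longleftrightarrow> l \<noteq> 0 \<and> (\<forall>(k::int) m. l = k *s m \<longrightarrow> \<bar>k\<bar> = 1)"

definition kempf_opt :: "('n::finite \<Rightarrow> int^'r::finite) \<Rightarrow> int^'r^'r \<Rightarrow> int^'r \<Rightarrow> complex^'n \<Rightarrow> int^'r \<Rightarrow> bool" where
  "kempf_opt chis B c x l \<longleftrightarrow> l \<noteq> 0 \<and> indivisible l \<and> lim_exists chis l x \<and>
     (\<forall>m. m \<noteq> 0 \<and> lim_exists chis m x \<longrightarrow>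
        of_int (pair c l) / lnorm B l \<le> of_int (pair c m) / lnorm B m)"

definition kempf_ps :: "('n::finite \<Rightarrow> int^'r::finite) \<Rightarrow> int^'r^'r \<Rightarrow> int^'r \<Rightarrow> complex^'n \<Rightarrow> int^'r" where
  "kempf_ps chis B c x = (THE l. kempf_opt chis B c x l)"

definition Lambda_set :: "('n::finite \<Rightarrow> int^'r::finite) \<Rightarrow> int^'r^'r \<Rightarrow> int^'r \<Rightarrow> (int^'r) set" where
  "Lambda_set chis B c = kempf_ps chis B c ` {x. unstable chis c x}"

definition S_strat :: "('n::finite \<Rightarrow> int^'r::finite) \<Rightarrow> int^'r^'r \<Rightarrow> int^'r \<Rightarrow> int^'r \<Rightarrow> (complex^'n) set" where
  "S_strat chis B c l = {x. unstable chis c x \<and> kempf_ps chis B c x = l}"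

definition Vset :: "'n::finite set \<Rightarrow> (complex^'n) set" where
  "Vset S = {x. \<forall>i\<in>S. x$i = 0}"

definition Dset :: "'n::finite set \<Rightarrow> (complex^'n) set" where
  "Dset S = {x. (\<Prod>i\<in>S. x$i) \<noteq> 0}"

definition Lset :: "'n::finite set \<Rightarrow> (complex^'n) set" where
  "Lset S = Dset S \<inter> Vset (UNIV - S)"

end

theory Submission
  imports Defs "HOL-Analysis.Analysis"
begin


definition rv :: "int^'r::finite \<Rightarrow> real^'r" where
  "rv v = (\<chi> k. of_int (v$k))"

definition Qf :: "int^'r::finite^'r \<Rightarrow> real^'r \<Rightarrow> real" where
  "Qf B v = (\<Sum>i\<in>UNIV. \<Sum>j\<in>UNIV. v$i * of_int (B$i$j) * v$j)"

definition bf :: "int^'r::finite^'r \<Rightarrow> real^'r \<Rightarrow> real^'r \<Rightarrow> real" where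
  "bf B v w = (\<Sum>i\<in>UNIV. \<Sum>j\<in>UNIV. v$i * of_int (B$i$j) * w$j)"

definition Bm :: "int^'r::finite^'r \<Rightarrow> real^'r \<Rightarrow> real^'r" where
  "Bm B v = (\<chi> k. \<Sum>j\<in>UNIV. of_int (B$k$j) * v$j)"

lemma inner_rv: "inner (rv a) (rv b) = of_int (pair a b)"
  by (simp add: rv_def inner_vec_def pair_def)

lemma rv_eq0: "rv v = 0 \<longleftrightarrow> v = 0"
  by (auto simp: rv_def vec_eq_iff)

lemma rv_add: "rv (a + b) = rv a + rv b"
  by (auto simp: rv_def vec_eq_iff)

lemma lnorm_rv: "lnorm B l = sqrt (Qf B (rv l))"
  by (simp add: lnorm_def Qf_def rv_def)

lemma Qf_bf: "Qf B v = bf B v v" by (simp add: Qf_def bf_def)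

lemma Qf_pos: "inner_ok B \<Longrightarrow> v \<noteq> 0 \<Longrightarrow> Qf B v > 0"
  by (simp add: inner_ok_def Qf_def)

lemma Qf_nonneg: "inner_ok B \<Longrightarrow> Qf B v \<ge> 0"
  using Qf_pos[of B v] by (cases "v = 0") (auto simp: Qf_def)

lemma bf_sym: "inner_ok B \<Longrightarrow> bf B v w = bf B w v"
  unfolding bf_def inner_ok_def
  apply (subst sum.swap)
  apply (intro sum.cong refl)
  by (auto simp: algebra_simps)

lemma bf_add_left: "bf B (u + v) w = bf B u w + bf B v w"
  by (simp add: bf_def algebra_simps sum.distrib)

lemma bf_add_right: "bf B w (u + v) = bf B w u + bf B w v"
  by (simp add: bf_def algebra_simps sum.distrib)

lemma bf_scale_left: "bf B (t *\<^sub>R u) w = t * bf B u w"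
  by (simp add: bf_def algebra_simps sum_distrib_left)

lemma bf_scale_right: "bf B w (t *\<^sub>R u) = t * bf B w u"
  by (simp add: bf_def algebra_simps sum_distrib_left)

lemma bf_diff_left: "bf B (u - v) w = bf B u w - bf B v w"
  by (simp add: bf_def algebra_simps sum_subtractf)

lemma bf_diff_right: "bf B w (u - v) = bf B w u - bf B w v"
  by (simp add: bf_def algebra_simps sum_subtractf)

lemma Qf_scale: "Qf B (t *\<^sub>R v) = t^2 * Qf B v"
  by (simp add: Qf_bf bf_scale_left bf_scale_right power2_eq_square)

lemma Qf_add_scale: "inner_ok B \<Longrightarrow> Qf B (v + t *\<^sub>R w) = Qf B v + 2 * t * bf B v w + t^2 * Qf B w"
  by (simp add: Qf_bf bf_add_left bf_add_right bf_scale_left bf_scale_right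
      power2_eq_square algebra_simps bf_sym[of B w v])

lemma bf_Bm: "inner_ok B \<Longrightarrow> bf B v w = inner (Bm B v) w"
proof -
  assume "inner_ok B"
  then have s: "B$i$j = B$j$i" for i j by (simp add: inner_ok_def)
  have "inner (Bm B v) w = (\<Sum>k\<in>UNIV. \<Sum>j\<in>UNIV. of_int (B$k$j) * v$j * w$k)"
    by (simp add: Bm_def inner_vec_def sum_distrib_right)
  also have "\<dots> = (\<Sum>j\<in>UNIV. \<Sum>k\<in>UNIV. v$j * of_int (B$j$k) * w$k)"
    by (subst sum.swap) (simp add: s algebra_simps)
  finally show ?thesis by (simp add: bf_def)
qed

lemma bf_cs: assumes "inner_ok B" shows "bf B u v \<le> sqrt (Qf B u) * sqrt (Qf B v)"
proof (cases "v = 0")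
  case True then show ?thesis by (simp add: bf_def Qf_def)
next
  case False
  define b where "b = bf B u v"
  define q where "q = Qf B v"
  have q: "q > 0" using Qf_pos[OF assms False] by (simp add: q_def)
  have "0 \<le> Qf B (u + (- b / q) *\<^sub>R v)" by (rule Qf_nonneg[OF assms])
  also have "\<dots> = Qf B u + 2 * (- b / q) * b + (- b / q)^2 * q"
    unfolding Qf_add_scale[OF assms] b_def q_def ..
  also have "\<dots> = Qf B u - b^2 / q"
    using q by (simp add: field_simps power2_eq_square)
  finally have "b^2 \<le> Qf B u * q" using q by (simp add: field_simps)
  then have "sqrt (b^2) \<le> sqrt (Qf B u * q)" by (rule real_sqrt_le_mono)
  then show ?thesis by (simp add: b_def q_def real_sqrt_mult)
qed



lemma comp_lim_iff:
  fixes x :: complex and k :: int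
  shows "(\<exists>L. ((\<lambda>t. t powi k * x) \<longlongrightarrow> L) (at 0)) \<longleftrightarrow> (x \<noteq> 0 \<longrightarrow> k \<ge> 0)"
proof
  assume "\<exists>L. ((\<lambda>t. t powi k * x) \<longlongrightarrow> L) (at 0)"
  then obtain L where L: "((\<lambda>t. t powi k * x) \<longlongrightarrow> L) (at 0)" by blast
  show "x \<noteq> 0 \<longrightarrow> k \<ge> 0"
  proof (rule ccontr)
    assume "\<not> (x \<noteq> 0 \<longrightarrow> k \<ge> 0)"
    then have x: "x \<noteq> 0" and k: "k < 0" by auto
    define n where "n = nat (-k)"
    have n: "n > 0" using k by (simp add: n_def)
    have "((\<lambda>t::complex. t ^ n) \<longlongrightarrow> 0 ^ n) (at 0)"
      by (intro tendsto_intros)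
    then have t0: "((\<lambda>t::complex. t ^ n) \<longlongrightarrow> 0) (at 0)" using n by (simp add: power_0_left)
    have "((\<lambda>t. (t powi k * x) * t ^ n) \<longlongrightarrow> L * 0) (at 0)"
      by (intro tendsto_mult L t0)
    moreover have "eventually (\<lambda>t. (t powi k * x) * t ^ n = x) (at 0)"
    proof -
      have "eventually (\<lambda>t::complex. t \<noteq> 0) (at 0)" by (simp add: eventually_at_filter)
      then show ?thesis
      proof (rule eventually_mono)
        fix t :: complex assume t: "t \<noteq> 0"
        have "t powi k = inverse t ^ n" using k by (simp add: power_int_def n_def)
        then have "t powi k * t ^ n = 1" using t by (simp add: power_mult_distrib[symmetric])
        then show "(t powi k * x) * t ^ n = x" by (simp add: algebra_simps)
      qed
    qed
    ultimately have "((\<lambda>t. x) \<longlongrightarrow> 0) (at (0::complex))"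
      by (simp add: tendsto_cong)
    then have "x = 0" by (simp add: tendsto_const_iff)
    with x show False by simp
  qed
next
  assume h: "x \<noteq> 0 \<longrightarrow> k \<ge> 0"
  show "\<exists>L. ((\<lambda>t. t powi k * x) \<longlongrightarrow> L) (at 0)"
  proof (cases "x = 0")
    case True then show ?thesis by auto
  next
    case False
    then have k: "k \<ge> 0" using h by auto
    have e: "t powi k = t ^ nat k" for t :: complex using k by (simp add: power_int_def)
    have "((\<lambda>t::complex. t ^ nat k * x) \<longlongrightarrow> 0 ^ nat k * x) (at 0)"
      by (intro tendsto_intros)
    then show ?thesis by (auto simp: e)
  qed
qed

lemma lim_exists_iff:
  "lim_exists chis m x \<longleftrightarrow> (\<forall>i. x$i \<noteq> 0 \<longrightarrow> 0 \<le> pair (chis i) m)"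
proof
  assume "lim_exists chis m x"
  then obtain L where L: "((\<lambda>t. act chis m t x) \<longlongrightarrow> L) (at 0)" by (auto simp: lim_exists_def)
  show "\<forall>i. x$i \<noteq> 0 \<longrightarrow> 0 \<le> pair (chis i) m"
  proof (intro allI)
    fix i
    have "((\<lambda>t. act chis m t x $ i) \<longlongrightarrow> L $ i) (at 0)" by (intro tendsto_vec_nth L)
    then have "\<exists>L. ((\<lambda>t. t powi (pair (chis i) m) * x$i) \<longlongrightarrow> L) (at 0)" by (auto simp: act_def)
    then show "x$i \<noteq> 0 \<longrightarrow> 0 \<le> pair (chis i) m" by (simp add: comp_lim_iff)
  qed
next
  assume h: "\<forall>i. x$i \<noteq> 0 \<longrightarrow> 0 \<le> pair (chis i) m"
  have "\<exists>L. ((\<lambda>t. t powi (pair (chis i) m) * x$i) \<longlongrightarrow> L) (at 0)" for i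
    using h by (simp add: comp_lim_iff)
  then obtain L where L: "\<And>i. ((\<lambda>t. t powi (pair (chis i) m) * x$i) \<longlongrightarrow> L i) (at 0)" by metis
  have "((\<lambda>t. act chis m t x) \<longlongrightarrow> (\<chi> i. L i)) (at 0)"
    unfolding act_def by (intro tendsto_vec_lambda L)
  then show "lim_exists chis m x" by (auto simp: lim_exists_def)
qed



lemma rat_proj_exists:
  "\<exists>\<phi>::real\<Rightarrow>real. (\<forall>x y. \<phi> (x+y) = \<phi> x + \<phi> y) \<and> (\<forall>q x. \<phi> (of_rat q * x) = of_rat q * \<phi> x)
      \<and> (\<forall>x. \<phi> x \<in> \<rat>) \<and> \<phi> 1 = 1"
proof -
  interpret V: vector_space "\<lambda>q::rat. \<lambda>x::real. of_rat q * x"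
    by unfold_locales (auto simp: algebra_simps of_rat_add of_rat_mult)
  interpret P: vector_space_pair "\<lambda>q::rat. \<lambda>x::real. of_rat q * x" "\<lambda>q::rat. \<lambda>x::real. of_rat q * x"
    by unfold_locales
  have ind: "V.independent {1::real}"
    using V.independent_empty by (intro V.independent_insertI) auto
  from P.linear_independent_extend_subspace[OF ind, of id]
  obtain g where g: "Vector_Spaces.linear (\<lambda>q::rat. \<lambda>x::real. of_rat q * x) (\<lambda>q::rat. \<lambda>x::real. of_rat q * x) g"
     "g 1 = 1" "range g = V.span {1}" by auto
  have r: "g x \<in> \<rat>" for x
  proof -
    have "g x \<in> V.span {1}" using g(3) by auto
    then show ?thesis by (auto simp: V.span_singleton)
  qed
  show ?thesis
    apply (rule exI[of _ g])
    using g r by (auto simp: Vector_Spaces.linear_def module_hom_def module_hom_axioms_def)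
qed

lemma inner_rv_expand: "inner (rv g) v = (\<Sum>k\<in>UNIV. of_int (g$k) * v$k)"
  by (simp add: inner_vec_def rv_def)

lemma rat_fixed:
  fixes v :: "real^'r::finite" and \<nu> :: "int^'r \<Rightarrow> real" and Gi :: "(int^'r) set"
  assumes fin: "finite Gi"
   and uniq: "\<And>v1 \<nu>1. (\<forall>k. Bm B v1 $ k = (\<Sum>g\<in>Gi. \<nu>1 g * of_int (g$k))) \<Longrightarrow>
                 (\<forall>g\<in>Gi. inner (rv g) v1 = of_int (h g)) \<Longrightarrow> v1 = v"
   and s1: "\<forall>k. Bm B v $ k = (\<Sum>g\<in>Gi. \<nu> g * of_int (g$k))"
   and s2: "\<forall>g\<in>Gi. inner (rv g) v = of_int (h g)"
 shows "v$k \<in> \<rat>"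
proof -
  obtain \<phi> :: "real \<Rightarrow> real" where add: "\<And>x y. \<phi> (x+y) = \<phi> x + \<phi> y"
    and sc: "\<And>q x. \<phi> (of_rat q * x) = of_rat q * \<phi> x" and ra: "\<And>x. \<phi> x \<in> \<rat>" and one: "\<phi> 1 = 1"
    using rat_proj_exists by blast
  have z: "\<phi> 0 = 0" using add[of 0 0] by simp
  have sm: "\<phi> (sum f S) = (\<Sum>s\<in>S. \<phi> (f s))" for f :: "'z \<Rightarrow> real" and S
    by (induction S rule: infinite_finite_induct) (auto simp: z add)
  have im: "\<phi> (of_int a * y) = of_int a * \<phi> y" for a y
    using sc[of "of_int a" y] by simp
  have im2: "\<phi> (y * of_int a) = \<phi> y * of_int a" for a y
    using im[of a y] by (simp add: mult.commute)
  have ii: "\<phi> (of_int a) = of_int a" for a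
    using im[of a 1] one by simp
  define v1 where "v1 = (\<chi> k. \<phi> (v$k))"
  have "v1 = v"
  proof (rule uniq[of v1 "\<lambda>g. \<phi> (\<nu> g)"])
    show "\<forall>k. Bm B v1 $ k = (\<Sum>g\<in>Gi. \<phi> (\<nu> g) * of_int (g$k))"
    proof
      fix k
      have "Bm B v1 $ k = \<phi> (Bm B v $ k)"
        by (simp add: Bm_def v1_def sm im)
      also have "\<dots> = (\<Sum>g\<in>Gi. \<phi> (\<nu> g) * of_int (g$k))"
        using s1 by (simp add: sm im2)
      finally show "Bm B v1 $ k = (\<Sum>g\<in>Gi. \<phi> (\<nu> g) * of_int (g$k))" .
    qed
    show "\<forall>g\<in>Gi. inner (rv g) v1 = of_int (h g)"
    proof
      fix g assume g: "g \<in> Gi"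
      have "inner (rv g) v1 = \<phi> (inner (rv g) v)"
        by (simp add: inner_rv_expand v1_def sm im)
      then show "inner (rv g) v1 = of_int (h g)" using s2 g by (simp add: ii)
    qed
  qed
  then have "v$k = \<phi> (v$k)" by (metis v1_def vec_lambda_beta)
  then show ?thesis using ra by metis
qed


lemma int_dir:
  fixes v :: "real^'r::finite"
  assumes rat: "\<And>k. v$k \<in> \<rat>" and nz: "v \<noteq> 0"
  shows "\<exists>l t. indivisible l \<and> t > 0 \<and> rv l = t *\<^sub>R v"
proof -
  have "\<exists>n::int. n > 0 \<and> of_int n * v$k \<in> \<int>" for k
  proof -
    from rat[of k] obtain a b :: int where "b > 0" "v$k = of_int a / of_int b"
      by (metis Rats_cases')
    then show ?thesis by (intro exI[of _ b]) auto
  qed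
  then obtain n where n: "\<And>k. n k > (0::int)" "\<And>k. of_int (n k) * v$k \<in> \<int>" by metis
  define D where "D = (\<Prod>k\<in>UNIV. n k)"
  have D: "D > 0" using n(1) by (simp add: D_def prod_pos)
  have "of_int D * v$k \<in> \<int>" for k
  proof -
    have "D = n k * (\<Prod>j\<in>UNIV-{k}. n j)" by (simp add: D_def prod.remove)
    then have "of_int D * v$k = (of_int (n k) * v$k) * of_int (\<Prod>j\<in>UNIV-{k}. n j)" by simp
    then show ?thesis using n(2)[of k] by (metis Ints_mult Ints_of_int)
  qed
  then have "\<forall>k. \<exists>z::int. of_int D * v$k = of_int z"
  proof (intro allI)
    fix k
    assume a: "\<And>k. of_int D * v$k \<in> \<int>"
    from a[of k] obtain z where "of_int D * v$k = of_int z" by (rule Ints_cases)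
    then show "\<exists>z::int. of_int D * v$k = of_int z" by blast
  qed
  then obtain w where w: "\<And>k. of_int D * v$k = of_int (w k)" using choice[of "\<lambda>k z. of_int D * v$k = of_int z"] by blast
  define wv where "wv = (\<chi> k. w k)"
  have rw: "rv wv = of_int D *\<^sub>R v" by (simp add: rv_def wv_def vec_eq_iff w)
  have wnz: "wv \<noteq> 0" using nz D rw by (metis rv_eq0 scaleR_eq_0_iff of_int_0_less_iff less_irrefl)
  define g where "g = Gcd (range (\<lambda>k. wv$k))"
  have gdvd: "g dvd wv$k" for k unfolding g_def by (rule Gcd_dvd) auto
  have g0: "g \<noteq> 0" using wnz by (auto simp: g_def vec_eq_iff)
  have gpos: "g > 0" using g0 by (simp add: g_def order_le_neq_trans)
  define l where "l = (\<chi> k. wv$k div g)"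
  have wl: "wv = g *s l" using gdvd by (simp add: l_def vec_eq_iff)
  have ind: "indivisible l"
    unfolding indivisible_def
  proof (intro conjI allI impI)
    show "l \<noteq> 0" using wnz wl by auto
    fix k :: int and m assume lm: "l = k *s m"
    have "g * k dvd wv$j" for j using wl lm by simp
    then have "g * k dvd g" unfolding g_def by (intro Gcd_greatest) auto
    then have "k dvd 1" using g0 by (metis dvd_mult_cancel_left mult.right_neutral)
    then show "\<bar>k\<bar> = 1" by simp
  qed
  have "rv wv = of_int g *\<^sub>R rv l" by (simp add: wl rv_def vec_eq_iff)
  then have "rv l = (of_int D / of_int g) *\<^sub>R v" using gpos rw
    by (simp add: vec_eq_iff field_simps)
  then show ?thesis using ind D gpos by (intro exI[of _ l] exI[of _ "of_int D / of_int g"]) auto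
qed



lemma Bm_diff: "Bm B (v - w) = Bm B v - Bm B w"
  by (simp add: Bm_def vec_eq_iff algebra_simps sum_subtractf)

lemma kempf_exists:
  fixes chis :: "'n::finite \<Rightarrow> int^'r::finite"
  assumes B: "inner_ok B" and us: "unstable chis c x"
  shows "\<exists>l. kempf_opt chis B c x l"
proof -
  define Cn where "Cn = {v::real^'r. \<forall>i. x$i \<noteq> 0 \<longrightarrow> 0 \<le> inner (rv (chis i)) v}"
  define F where "F v = inner (rv c) v / sqrt (Qf B v)" for v
  have limC: "lim_exists chis m x \<longleftrightarrow> rv m \<in> Cn" for m
    by (simp add: lim_exists_iff Cn_def inner_rv)
  obtain m0 where m0: "lim_exists chis m0 x" "pair c m0 < 0"
    using us by (auto simp: unstable_def)
  have m0C: "rv m0 \<in> Cn" using m0 limC by blast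
  have m0nz: "rv m0 \<noteq> 0" using m0(2) by (auto simp: rv_eq0 pair_def)
  have Fscale: "F (t *\<^sub>R v) = F v" if "t > 0" for t v
    using that by (simp add: F_def Qf_scale real_sqrt_mult)
  have Cscale: "t *\<^sub>R v \<in> Cn" if "v \<in> Cn" "t \<ge> 0" for t v
    using that by (auto simp: Cn_def)
  define K where "K = Cn \<inter> sphere 0 1"
  have clC: "closed Cn"
    unfolding Cn_def
    by (intro closed_Collect_all closed_Collect_imp open_Collect_const closed_Collect_le continuous_intros)
  have cK: "compact K" unfolding K_def using clC by (intro closed_Int_compact) auto
  have Kne: "K \<noteq> {}"
  proof -
    have "(1 / norm (rv m0)) *\<^sub>R rv m0 \<in> K"
      using m0C m0nz by (auto simp: K_def intro!: Cscale)
    then show ?thesis by blast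
  qed
  have Qcont: "continuous_on S (Qf B)" for S
    unfolding Qf_def by (intro continuous_intros)
  have contF: "continuous_on K F"
  proof -
    have "continuous_on K (\<lambda>v. inner (rv c) v / sqrt (Qf B v))"
    proof (rule continuous_on_divide)
      show "continuous_on K (\<lambda>v. inner (rv c) v)" by (intro continuous_intros)
      show "continuous_on K (\<lambda>v. sqrt (Qf B v))" by (intro continuous_intros Qcont)
      show "\<forall>v\<in>K. sqrt (Qf B v) \<noteq> 0"
      proof
        fix v assume "v \<in> K"
        then have "v \<noteq> 0" by (auto simp: K_def)
        then show "sqrt (Qf B v) \<noteq> 0" using Qf_pos[OF B] by fastforce
      qed
    qed
    then show ?thesis by (simp add: F_def[abs_def])
  qed
  obtain u where u: "u \<in> K" "\<And>y. y \<in> K \<Longrightarrow> F u \<le> F y"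
    using continuous_attains_inf[OF cK Kne contF] by blast
  have uC: "u \<in> Cn" and unz: "u \<noteq> 0" using u(1) by (auto simp: K_def)
  have umin: "F u \<le> F v" if "v \<in> Cn" "v \<noteq> 0" for v
  proof -
    have "(1 / norm v) *\<^sub>R v \<in> K" using that by (auto simp: K_def intro!: Cscale)
    then have "F u \<le> F ((1 / norm v) *\<^sub>R v)" by (rule u(2))
    also have "\<dots> = F v" using that by (intro Fscale) auto
    finally show ?thesis .
  qed
  have Fm0: "F (rv m0) < 0"
    using m0(2) Qf_pos[OF B m0nz] by (simp add: F_def inner_rv divide_neg_pos)
  have Fu: "F u < 0" using umin[OF m0C m0nz] Fm0 by simp
  have cu: "inner (rv c) u < 0"
  proof -
    have "sqrt (Qf B u) \<ge> 0" using Qf_nonneg[OF B] by simp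
    then show ?thesis using Fu by (auto simp: F_def divide_less_0_iff)
  qed
  define vs where "vs = (-1 / inner (rv c) u) *\<^sub>R u"
  have vsC: "vs \<in> Cn" unfolding vs_def using cu uC by (intro Cscale) (auto simp: divide_nonneg_neg)
  have cvs: "inner (rv c) vs = -1" unfolding vs_def using cu by simp
  have vsnz: "vs \<noteq> 0" using cvs by auto
  have Fvs: "F vs = F u" unfolding vs_def using cu by (intro Fscale) (simp add: divide_pos_neg)
  have Qmin: "Qf B vs \<le> Qf B v" if "v \<in> Cn" "inner (rv c) v = -1" for v
  proof -
    have vnz: "v \<noteq> 0" using that by auto
    have "F vs \<le> F v" using umin[OF that(1) vnz] Fvs by simp
    then have "-1 / sqrt (Qf B vs) \<le> -1 / sqrt (Qf B v)" using that cvs by (simp add: F_def)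
    moreover have "sqrt (Qf B vs) > 0" "sqrt (Qf B v) > 0"
      using Qf_pos[OF B vsnz] Qf_pos[OF B vnz] by auto
    ultimately have "sqrt (Qf B vs) \<le> sqrt (Qf B v)" by (simp add: divide_le_eq field_simps)
    then show ?thesis by simp
  qed
  define T where "T = {i. x$i \<noteq> 0 \<and> inner (rv (chis i)) vs = 0}"
  define Gi where "Gi = insert c (chis ` T)"
  define h where "h g = (if g = c then -1 else (0::int))" for g
  have finG: "finite Gi" by (simp add: Gi_def)
  have hvs: "\<forall>g\<in>Gi. inner (rv g) vs = of_int (h g)"
    using cvs by (auto simp: Gi_def h_def T_def)
  have crit: "bf B vs w = 0" if w: "\<forall>g\<in>Gi. inner (rv g) w = 0" for w
  proof -
    have wc: "inner (rv c) w = 0" and wT: "\<And>i. i \<in> T \<Longrightarrow> inner (rv (chis i)) w = 0"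
      using w by (auto simp: Gi_def)
    have ev: "eventually (\<lambda>t. vs + t *\<^sub>R w \<in> Cn) (nhds (0::real))"
    proof -
      have "eventually (\<lambda>t. x$i \<noteq> 0 \<longrightarrow> 0 \<le> inner (rv (chis i)) (vs + t *\<^sub>R w)) (nhds (0::real))" for i
      proof (cases "x$i \<noteq> 0 \<and> i \<notin> T")
        case True
        then have pos: "inner (rv (chis i)) vs > 0" using vsC by (auto simp: Cn_def T_def order_le_neq_trans)
        have "((\<lambda>t. inner (rv (chis i)) vs + t * inner (rv (chis i)) w) \<longlongrightarrow>
                inner (rv (chis i)) vs + 0 * inner (rv (chis i)) w) (nhds (0::real))"
          by (intro tendsto_intros filterlim_ident)
        then have "eventually (\<lambda>t. inner (rv (chis i)) vs + t * inner (rv (chis i)) w > 0) (nhds (0::real))"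
          using pos by (intro order_tendstoD(1)) auto
        then show ?thesis by eventually_elim (simp add: inner_add_right)
      next
        case False
        then show ?thesis using wT vsC by (auto simp: Cn_def T_def inner_add_right)
      qed
      then have "eventually (\<lambda>t. \<forall>i. x$i \<noteq> 0 \<longrightarrow> 0 \<le> inner (rv (chis i)) (vs + t *\<^sub>R w)) (nhds (0::real))"
        by (rule eventually_all_finite)
      then show ?thesis by (simp add: Cn_def)
    qed
    have ev2: "eventually (\<lambda>t. 0 \<le> 2 * t * bf B vs w + t^2 * Qf B w) (nhds (0::real))"
      using ev
    proof eventually_elim
      case (elim t)
      have "inner (rv c) (vs + t *\<^sub>R w) = -1" using cvs wc by (simp add: inner_add_right)
      then have "Qf B vs \<le> Qf B (vs + t *\<^sub>R w)" using Qmin elim by blast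
      then show ?case by (simp add: Qf_add_scale[OF B])
    qed
    have r: "0 \<le> 2 * bf B vs w"
    proof (rule tendsto_lowerbound)
      show "((\<lambda>t. 2 * bf B vs w + t * Qf B w) \<longlongrightarrow> 2 * bf B vs w) (at_right (0::real))"
        by (rule tendsto_eq_intros tendsto_ident_at refl)+ simp
      show "eventually (\<lambda>t. 0 \<le> 2 * bf B vs w + t * Qf B w) (at_right (0::real))"
        using ev2 unfolding eventually_at_filter
      proof eventually_elim
        case (elim t)
        show ?case
        proof (intro impI)
          assume "t \<noteq> 0" "t \<in> {0<..}"
          then have "t > 0" by simp
          with elim \<open>t \<noteq> 0\<close> have "0 \<le> t * (2 * bf B vs w + t * Qf B w)"
            by (simp add: power2_eq_square algebra_simps)
          with \<open>t > 0\<close> show "0 \<le> 2 * bf B vs w + t * Qf B w" by (simp add: zero_le_mult_iff)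
        qed
      qed
    qed simp
    have l: "2 * bf B vs w \<le> 0"
    proof (rule tendsto_upperbound)
      show "((\<lambda>t. 2 * bf B vs w + t * Qf B w) \<longlongrightarrow> 2 * bf B vs w) (at_left (0::real))"
        by (rule tendsto_eq_intros tendsto_ident_at refl)+ simp
      show "eventually (\<lambda>t. 2 * bf B vs w + t * Qf B w \<le> 0) (at_left (0::real))"
        using ev2 unfolding eventually_at_filter
      proof eventually_elim
        case (elim t)
        show ?case
        proof (intro impI)
          assume "t \<noteq> 0" "t \<in> {..<0}"
          then have "t < 0" by simp
          with elim have "0 \<le> t * (2 * bf B vs w + t * Qf B w)"
            by (simp add: power2_eq_square algebra_simps)
          with \<open>t < 0\<close> show "2 * bf B vs w + t * Qf B w \<le> 0" by (simp add: zero_le_mult_iff)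
        qed
      qed
    qed simp
    from r l show ?thesis by simp
  qed
  define sol where "sol v \<nu> \<longleftrightarrow> (\<forall>k. Bm B v $ k = (\<Sum>g\<in>Gi. \<nu> g * of_int (g$k))) \<and>
       (\<forall>g\<in>Gi. inner (rv g) v = of_int (h g))" for v \<nu>
  have injrv: "inj rv" by (auto simp: inj_def rv_def vec_eq_iff)
  have ex: "\<exists>\<nu>. sol vs \<nu>"
  proof -
    define y where "y = Bm B vs"
    define S where "S = rv ` Gi"
    obtain p z where p: "p \<in> span S" and z: "\<And>w. w \<in> span S \<Longrightarrow> orthogonal z w" and yz: "y = p + z"
      using orthogonal_subspace_decomp_exists by blast
    have "\<forall>g\<in>Gi. inner (rv g) z = 0"
    proof
      fix g assume "g \<in> Gi"
      then have "rv g \<in> span S" by (auto simp: S_def intro: span_base)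
      then show "inner (rv g) z = 0" using z[of "rv g"] by (simp add: orthogonal_def inner_commute)
    qed
    then have "bf B vs z = 0" by (rule crit)
    then have "inner y z = 0" by (simp add: y_def bf_Bm[OF B])
    moreover have "inner p z = 0" using z[OF p] by (simp add: orthogonal_def inner_commute)
    ultimately have "inner z z = 0" by (simp add: yz inner_add_left)
    then have "z = 0" by simp
    then have "y \<in> span S" using p yz by simp
    moreover have "finite S" using finG by (simp add: S_def)
    ultimately obtain u where u: "y = (\<Sum>s\<in>S. u s *\<^sub>R s)" using span_finite[of S] by auto
    also have "\<dots> = (\<Sum>g\<in>Gi. u (rv g) *\<^sub>R rv g)"
      unfolding S_def by (rule sum.reindex_cong[OF inj_on_subset[OF injrv]]) auto
    finally have "y = (\<Sum>g\<in>Gi. u (rv g) *\<^sub>R rv g)" .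
    then have "\<forall>k. Bm B vs $ k = (\<Sum>g\<in>Gi. u (rv g) * of_int (g$k))"
      by (simp add: y_def rv_def)
    then show ?thesis using hvs by (auto simp: sol_def)
  qed
  then obtain \<nu>0 where \<nu>0: "sol vs \<nu>0" by blast
  have uniq: "v1 = v2" if "sol v1 \<nu>1" "sol v2 \<nu>2" for v1 v2 \<nu>1 \<nu>2
  proof -
    define d where "d = v1 - v2"
    have dG: "inner (rv g) d = 0" if "g \<in> Gi" for g
      using \<open>sol v1 \<nu>1\<close> \<open>sol v2 \<nu>2\<close> that by (simp add: sol_def d_def inner_diff_right)
    have Bd: "Bm B d $ k = (\<Sum>g\<in>Gi. (\<nu>1 g - \<nu>2 g) * of_int (g$k))" for k
      using \<open>sol v1 \<nu>1\<close> \<open>sol v2 \<nu>2\<close>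
      by (simp add: sol_def d_def Bm_diff algebra_simps sum_subtractf)
    have "Qf B d = inner (Bm B d) d" by (simp add: Qf_bf bf_Bm[OF B])
    also have "\<dots> = (\<Sum>k\<in>UNIV. (\<Sum>g\<in>Gi. (\<nu>1 g - \<nu>2 g) * of_int (g$k)) * d$k)"
      by (simp add: inner_vec_def Bd)
    also have "\<dots> = (\<Sum>g\<in>Gi. (\<nu>1 g - \<nu>2 g) * (\<Sum>k\<in>UNIV. of_int (g$k) * d$k))"
      by (simp add: sum_distrib_left sum_distrib_right algebra_simps sum.swap[of _ UNIV])
    also have "\<dots> = 0" using dG by (simp add: inner_rv_expand)
    finally have "Qf B d = 0" .
    then have "d = 0" using Qf_pos[OF B, of d] by fastforce
    then show ?thesis by (simp add: d_def)
  qed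
  have rat: "vs$k \<in> \<rat>" for k
  proof (rule rat_fixed[OF finG, of B h vs \<nu>0])
    fix v1 \<nu>1
    assume "\<forall>k. Bm B v1 $ k = (\<Sum>g\<in>Gi. \<nu>1 g * of_int (g$k))" "\<forall>g\<in>Gi. inner (rv g) v1 = of_int (h g)"
    then have "sol v1 \<nu>1" by (simp add: sol_def)
    then show "v1 = vs" using uniq \<nu>0 by blast
  qed (use \<nu>0 in \<open>auto simp: sol_def\<close>)
  obtain l t where l: "indivisible l" "t > 0" "rv l = t *\<^sub>R vs"
    using int_dir[OF rat vsnz] by blast
  have lC: "rv l \<in> Cn" using l vsC by (simp add: Cscale)
  have lnz: "l \<noteq> 0" using l(1) by (simp add: indivisible_def)
  have Fl: "F (rv l) = F u" using l Fvs Fscale by simp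
  have FF: "of_int (pair c m) / lnorm B m = F (rv m)" for m
    by (simp add: F_def lnorm_rv inner_rv)
  show ?thesis
  proof (intro exI[of _ l])
    show "kempf_opt chis B c x l"
      unfolding kempf_opt_def FF
    proof (intro conjI allI impI)
      show "l \<noteq> 0" "indivisible l" by (fact lnz) (fact l(1))
      show "lim_exists chis l x" using lC limC by blast
      fix m assume "m \<noteq> 0 \<and> lim_exists chis m x"
      then have "rv m \<in> Cn" "rv m \<noteq> 0" using limC rv_eq0 by auto
      then show "F (rv l) \<le> F (rv m)" using umin Fl by simp
    qed
  qed
qed


lemma indiv_one:
  fixes l :: "int^'r::finite"
  assumes ind: "indivisible l" and q: "q > 0" and dv: "\<And>i. q dvd l$i"
  shows "q = 1"
proof -
  define m where "m = (\<chi> i. l$i div q)"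
  have "l = q *s m" using dv by (simp add: m_def vec_eq_iff)
  then have "\<bar>q\<bar> = 1" using ind unfolding indivisible_def by blast
  then show ?thesis using q by simp
qed

lemma indiv_eq2:
  fixes l1 l2 :: "int^'r::finite"
  assumes i1: "indivisible l1" and i2: "indivisible l2" and p: "p > 0" and q: "q > 0"
    and e: "\<And>i. p * l1$i = q * l2$i"
  shows "l1 = l2"
proof -
  define g where "g = gcd p q"
  have g: "g > 0" using p by (simp add: g_def)
  define p' where "p' = p div g"
  define q' where "q' = q div g"
  have pp: "p = g * p'" and qq: "q = g * q'" by (simp_all add: p'_def q'_def g_def)
  have cop: "coprime p' q'" unfolding p'_def q'_def g_def using p by (intro div_gcd_coprime) simp
  have p'pos: "p' > 0" using p g pp by (simp add: zero_less_mult_iff)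
  have q'pos: "q' > 0" using q g qq by (simp add: zero_less_mult_iff)
  have e': "p' * l1$i = q' * l2$i" for i using e[of i] g by (simp add: pp qq)
  have "q' dvd l1$i" for i
  proof -
    have "q' dvd p' * l1$i" using e' by simp
    then show ?thesis using cop by (simp add: coprime_dvd_mult_right_iff coprime_commute)
  qed
  then have "q' = 1" by (rule indiv_one[OF i1 q'pos])
  have "p' dvd l2$i" for i
  proof -
    have "p' dvd q' * l2$i" using e'[of i] by (metis dvd_triv_left)
    then show ?thesis using cop by (simp add: coprime_dvd_mult_right_iff)
  qed
  then have "p' = 1" by (rule indiv_one[OF i2 p'pos])
  show ?thesis using e' \<open>p' = 1\<close> \<open>q' = 1\<close> by (simp add: vec_eq_iff)
qed

lemma indiv_eq:
  fixes l1 l2 :: "int^'r::finite"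
  assumes i1: "indivisible l1" and i2: "indivisible l2" and s: "s > 0" and t: "t > 0"
    and e: "s *\<^sub>R rv l1 = t *\<^sub>R rv l2"
  shows "l1 = l2"
proof -
  have ei: "s * of_int (l1$i) = t * of_int (l2$i)" for i
    using e by (simp add: vec_eq_iff rv_def)
  obtain j where j: "l1$j \<noteq> 0" using i1 by (auto simp: indivisible_def vec_eq_iff)
  have cross: "l1$i * l2$j = l1$j * l2$i" for i
  proof -
    have a1: "s * of_int (l1$i) * of_int (l2$j) = t * of_int (l2$i) * of_int (l2$j)" using ei[of i] by simp
    have a2: "s * of_int (l1$j) * of_int (l2$i) = t * of_int (l2$j) * of_int (l2$i)" using ei[of j] by simp
    have "s * (of_int (l1$i * l2$j) - of_int (l1$j * l2$i)) =
        s * of_int (l1$i) * of_int (l2$j) - s * of_int (l1$j) * of_int (l2$i)" by (simp add: algebra_simps)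
    also have "\<dots> = t * of_int (l2$i) * of_int (l2$j) - t * of_int (l2$j) * of_int (l2$i)" by (simp only: a1 a2)
    also have "\<dots> = 0" by simp
    finally have "s * (of_int (l1$i * l2$j) - of_int (l1$j * l2$i)) = 0" .
    then have "(of_int (l1$i * l2$j) :: real) = of_int (l1$j * l2$i)" using s by simp
    then show ?thesis by (simp only: of_int_eq_iff)
  qed
  have sg: "sgn (l2$j) = sgn (l1$j)"
  proof -
    have p1: "(0::real) < s * of_int (l1$j) \<longleftrightarrow> 0 < l1$j" using s by (simp add: zero_less_mult_iff)
    have p2: "(0::real) < t * of_int (l2$j) \<longleftrightarrow> 0 < l2$j" using t by (simp add: zero_less_mult_iff)
    have n1: "s * of_int (l1$j) < (0::real) \<longleftrightarrow> l1$j < 0" using s by (simp add: mult_less_0_iff)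
    have n2: "t * of_int (l2$j) < (0::real) \<longleftrightarrow> l2$j < 0" using t by (simp add: mult_less_0_iff)
    have "0 < l1$j \<longleftrightarrow> 0 < l2$j" "l1$j < 0 \<longleftrightarrow> l2$j < 0" using p1 p2 n1 n2 ei[of j] by auto
    then show ?thesis by (auto simp: sgn_if)
  qed
  have j2: "l2$j \<noteq> 0" using sg j by (metis sgn_0_0)
  show ?thesis
  proof (rule indiv_eq2[OF i1 i2, of "\<bar>l2$j\<bar>" "\<bar>l1$j\<bar>"])
    show "\<bar>l2$j\<bar> > 0" "\<bar>l1$j\<bar> > 0" using j j2 by auto
    fix i
    have "\<bar>l2$j\<bar> = l2$j * sgn (l1$j)" "\<bar>l1$j\<bar> = l1$j * sgn (l1$j)"
      using sg by (simp_all add: abs_sgn)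
    then show "\<bar>l2$j\<bar> * l1$i = \<bar>l1$j\<bar> * l2$i"
      using cross[of i] by (simp add: algebra_simps)
  qed
qed

lemma pair_add: "pair a (l1 + l2) = pair a l1 + pair a l2"
  by (simp add: pair_def algebra_simps sum.distrib)

lemma lnorm_pos: "inner_ok B \<Longrightarrow> m \<noteq> 0 \<Longrightarrow> lnorm B m > 0"
  by (simp add: lnorm_rv Qf_pos rv_eq0)

lemma kempf_unique:
  fixes chis :: "'n::finite \<Rightarrow> int^'r::finite"
  assumes B: "inner_ok B" and us: "unstable chis c x"
    and o1: "kempf_opt chis B c x l1" and o2: "kempf_opt chis B c x l2"
  shows "l1 = l2"
proof -
  define N where "N m = lnorm B m" for m
  have l1: "l1 \<noteq> 0" "indivisible l1" "lim_exists chis l1 x" using o1 by (auto simp: kempf_opt_def)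
  have l2: "l2 \<noteq> 0" "indivisible l2" "lim_exists chis l2 x" using o2 by (auto simp: kempf_opt_def)
  have opt1: "of_int (pair c l1) / N l1 \<le> of_int (pair c m) / N m" if "m \<noteq> 0" "lim_exists chis m x" for m
    using o1 that by (auto simp: kempf_opt_def N_def)
  have opt2: "of_int (pair c l2) / N l2 \<le> of_int (pair c m) / N m" if "m \<noteq> 0" "lim_exists chis m x" for m
    using o2 that by (auto simp: kempf_opt_def N_def)
  define a where "a = of_int (pair c l1) / N l1"
  have a2: "of_int (pair c l2) / N l2 = a" using opt1[OF l2(1,3)] opt2[OF l1(1,3)] by (simp add: a_def)
  have N1: "N l1 > 0" and N2: "N l2 > 0" using lnorm_pos[OF B] l1 l2 by (auto simp: N_def)
  obtain m where m: "lim_exists chis m x" "pair c m < 0" using us by (auto simp: unstable_def)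
  have mnz: "m \<noteq> 0" using m(2) by (auto simp: pair_def)
  have "of_int (pair c m) / N m < 0" using m(2) lnorm_pos[OF B mnz] by (simp add: N_def divide_neg_pos)
  then have aneg: "a < 0" using opt1[OF mnz m(1)] by (simp add: a_def)
  have p1: "of_int (pair c l1) = a * N l1" using N1 by (simp add: a_def)
  have p2: "of_int (pair c l2) = a * N l2" using N2 a2 by (simp add: field_simps)
  have s_nz: "l1 + l2 \<noteq> 0"
  proof
    assume "l1 + l2 = 0"
    then have "l2 = - l1" by (simp add: add_eq_0_iff)
    then have "pair c l2 = - pair c l1" by (simp add: pair_def sum_negf)
    then have "a * N l2 = - (a * N l1)" using p1 p2 by simp
    moreover have "a * N l2 < 0" "a * N l1 < 0" using aneg N1 N2 by (simp_all add: mult_neg_pos)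
    ultimately show False by simp
  qed
  have s_lim: "lim_exists chis (l1 + l2) x" using l1(3) l2(3) by (auto simp: lim_exists_iff pair_add)
  have N12: "N (l1 + l2) > 0" using lnorm_pos[OF B s_nz] by (simp add: N_def)
  have "a \<le> of_int (pair c (l1 + l2)) / N (l1 + l2)" using opt1[OF s_nz s_lim] by (simp add: a_def)
  also have "\<dots> = a * (N l1 + N l2) / N (l1 + l2)" by (simp add: pair_add p1 p2 algebra_simps)
  finally have "a * N (l1 + l2) \<le> a * (N l1 + N l2)" using N12 by (simp add: field_simps)
  then have ge: "N l1 + N l2 \<le> N (l1 + l2)" using aneg by simp
  define u where "u = rv l1"
  define v where "v = rv l2"
  have Nu: "N l1 = sqrt (Qf B u)" and Nv: "N l2 = sqrt (Qf B v)" and Nuv: "N (l1 + l2) = sqrt (Qf B (u + v))"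
    by (simp_all add: N_def lnorm_rv u_def v_def rv_add)
  have Qu: "Qf B u = N l1 ^ 2" and Qv: "Qf B v = N l2 ^ 2" using Nu Nv Qf_nonneg[OF B] by simp_all
  have Quv: "Qf B (u + v) = Qf B u + 2 * bf B u v + Qf B v"
    using Qf_add_scale[OF B, of u 1 v] by simp
  have cs: "bf B u v \<le> N l1 * N l2" using bf_cs[OF B, of u v] Nu Nv by simp
  have "N (l1 + l2) ^ 2 = Qf B (u + v)" using Nuv Qf_nonneg[OF B] by simp
  also have "\<dots> \<le> (N l1 + N l2) ^ 2" using Quv Qu Qv cs by (simp add: power2_eq_square algebra_simps)
  finally have "N (l1 + l2) \<le> N l1 + N l2" using N1 N2 N12 by (simp add: power_mono_iff abs_le_square_iff)
  with ge have eqN: "N (l1 + l2) = N l1 + N l2" by simp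
  then have "Qf B (u + v) = (N l1 + N l2) ^ 2" using Nuv Qf_nonneg[OF B] by (metis real_sqrt_pow2)
  then have buv: "bf B u v = N l1 * N l2" using Quv Qu Qv by (simp add: power2_eq_square algebra_simps)
  have "Qf B (N l2 *\<^sub>R u + (- N l1) *\<^sub>R v) = 0"
  proof -
    have "Qf B (N l2 *\<^sub>R u + (- N l1) *\<^sub>R v) = Qf B (N l2 *\<^sub>R u) + 2 * (- N l1) * bf B (N l2 *\<^sub>R u) v + (- N l1)^2 * Qf B v"
      by (rule Qf_add_scale[OF B])
    also have "\<dots> = 0" using Qu Qv buv by (simp add: Qf_scale bf_scale_left power2_eq_square algebra_simps)
    finally show ?thesis .
  qed
  then have "N l2 *\<^sub>R u + (- N l1) *\<^sub>R v = 0" using Qf_pos[OF B] by fastforce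
  then have "N l2 *\<^sub>R rv l1 = N l1 *\<^sub>R rv l2" by (simp add: u_def v_def algebra_simps)
  then show ?thesis by (rule indiv_eq[OF l1(2) l2(2) N2 N1])
qed

lemma kempf_ps_opt:
  assumes B: "inner_ok B" and us: "unstable chis c x"
  shows "kempf_opt chis B c x (kempf_ps chis B c x)"
proof -
  obtain l where "kempf_opt chis B c x l" using kempf_exists[OF B us] by blast
  then show ?thesis unfolding kempf_ps_def
  proof (rule theI)
    fix y assume "kempf_opt chis B c x y"
    then show "y = l" using kempf_unique[OF B us] \<open>kempf_opt chis B c x l\<close> by blast
  qed
qed

lemma kempf_ps_eq:
  assumes B: "inner_ok B" and us: "unstable chis c x" and o: "kempf_opt chis B c x l"
  shows "kempf_ps chis B c x = l"
  using kempf_unique[OF B us kempf_ps_opt[OF B us] o] .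



lemma opt_neg:
  assumes B: "inner_ok B" and us: "unstable chis c x" and o: "kempf_opt chis B c x l"
  shows "pair c l < 0"
proof -
  obtain m where m: "lim_exists chis m x" "pair c m < 0" using us by (auto simp: unstable_def)
  have mnz: "m \<noteq> 0" using m(2) by (auto simp: pair_def)
  have l: "l \<noteq> 0" using o by (simp add: kempf_opt_def)
  have "of_int (pair c l) / lnorm B l \<le> of_int (pair c m) / lnorm B m"
    using o m mnz by (auto simp: kempf_opt_def)
  also have "\<dots> < 0" using m(2) lnorm_pos[OF B mnz] by (simp add: divide_neg_pos)
  finally show ?thesis using lnorm_pos[OF B l] by (simp add: divide_less_0_iff)
qed

lemma X_lam_eq: "X_lam chis l = Vset (UNIV - {i. pair (chis i) l \<ge> 0})"
  by (auto simp: X_lam_def Vset_def lim_exists_iff)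

lemma S_opt:
  assumes B: "inner_ok B" and x: "x \<in> S_strat chis B c l"
  shows "unstable chis c x" "kempf_opt chis B c x l"
  using x kempf_ps_opt[OF B, of chis c x] by (auto simp: S_strat_def)

lemma S_in_X:
  assumes B: "inner_ok B" and x: "x \<in> S_strat chis B c l"
  shows "x \<in> X_lam chis l"
  using S_opt[OF B x] by (auto simp: X_lam_def kempf_opt_def)

lemma S_up:
  assumes B: "inner_ok B" and y: "y \<in> S_strat chis B c l"
    and sub: "\<And>i. y$i \<noteq> 0 \<Longrightarrow> x$i \<noteq> 0" and xX: "x \<in> X_lam chis l"
  shows "x \<in> S_strat chis B c l"
proof -
  have usy: "unstable chis c y" and oy: "kempf_opt chis B c y l" using S_opt[OF B y] by auto
  have neg: "pair c l < 0" by (rule opt_neg[OF B usy oy])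
  have lx: "lim_exists chis l x" using xX by (simp add: X_lam_def)
  have usx: "unstable chis c x" using lx neg by (auto simp: unstable_def)
  have ox: "kempf_opt chis B c x l"
    unfolding kempf_opt_def
  proof (intro conjI allI impI)
    show "l \<noteq> 0" "indivisible l" using oy by (auto simp: kempf_opt_def)
    show "lim_exists chis l x" by (fact lx)
    fix m assume m: "m \<noteq> 0 \<and> lim_exists chis m x"
    then have "lim_exists chis m y" using sub by (auto simp: lim_exists_iff)
    then show "of_int (pair c l) / lnorm B l \<le> of_int (pair c m) / lnorm B m"
      using oy m by (auto simp: kempf_opt_def)
  qed
  show ?thesis using kempf_ps_eq[OF B usx ox] usx by (simp add: S_strat_def)
qed

lemma Dset_iff: "x \<in> Dset A \<longleftrightarrow> (\<forall>i\<in>A. x$i \<noteq> 0)"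
  by (simp add: Dset_def)

lemma Lset_iff: "x \<in> Lset A \<longleftrightarrow> (\<forall>i\<in>A. x$i \<noteq> 0) \<and> (\<forall>i. i \<notin> A \<longrightarrow> x$i = 0)"
  by (auto simp: Lset_def Dset_def Vset_def)

definition indv :: "'n::finite set \<Rightarrow> complex^'n" where
  "indv A = (\<chi> i. if i \<in> A then 1 else 0)"

lemma indv_L: "indv A \<in> Lset A"
  by (simp add: Lset_iff indv_def)



theorem theorem3p17:
  fixes chis :: "'n::finite \<Rightarrow> int^'r::finite"
    and B :: "int^'r^'r" and c l :: "int^'r"
  assumes "inner_ok B"
    and "l \<in> Lambda_set chis B c"
  shows "let M = {i. pair (chis i) l \<ge> 0};
             Amin = {A. Lset A \<subseteq> S_strat chis B c l \<and>
                        (\<forall>A'. A' \<subset> A \<longrightarrow> \<not> Lset A' \<subseteq> S_strat chis B c l)}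
         in S_strat chis B c l = Vset (UNIV - M) \<inter> (\<Union>A\<in>Amin. Dset A)
          \<and> S_strat chis B c l = X_lam chis l \<inter> (\<Union>A\<in>Amin. Dset A)
          \<and> openin (top_of_set (X_lam chis l)) (S_strat chis B c l)
          \<and> (\<exists>\<V>. finite \<V> \<and> (\<forall>W\<in>\<V>. \<exists>T. W = Vset T) \<and>
                 S_strat chis B c l = X_lam chis l - \<Union>\<V>)
          \<and> connected (S_strat chis B c l)
          \<and> closure (S_strat chis B c l) = X_lam chis l"
proof -
  note B = assms(1)
  define M where "M = {i. pair (chis i) l \<ge> 0}"
  define S where "S = S_strat chis B c l"
  define X where "X = X_lam chis l"
  define Amin where "Amin = {A. Lset A \<subseteq> S \<and> (\<forall>A'. A' \<subset> A \<longrightarrow> \<not> Lset A' \<subseteq> S)}"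
  have XV: "X = Vset (UNIV - M)" by (simp add: X_def M_def X_lam_eq)
  have Xiff: "x \<in> X \<longleftrightarrow> (\<forall>i. x$i \<noteq> 0 \<longrightarrow> i \<in> M)" for x by (auto simp: XV Vset_def)
  have SX: "S \<subseteq> X" using S_in_X[OF B] by (auto simp: S_def X_def)
  have up: "x \<in> S" if "y \<in> S" "\<And>i. y$i \<noteq> 0 \<Longrightarrow> x$i \<noteq> 0" "x \<in> X" for x y
    using S_up[OF B, of y chis c l x] that by (simp add: S_def X_def)
  obtain x0 where x0: "x0 \<in> S" using assms(2)
    by (auto simp: Lambda_set_def S_def S_strat_def)
  have AM: "A \<subseteq> M" if "A \<in> Amin" for A
  proof -
    have "indv A \<in> S" using that indv_L by (auto simp: Amin_def)
    then have "indv A \<in> X" using SX by auto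
    then show ?thesis by (auto simp: Xiff indv_def)
  qed
  have P1: "S = X \<inter> (\<Union>A\<in>Amin. Dset A)"
  proof
    show "S \<subseteq> X \<inter> (\<Union>A\<in>Amin. Dset A)"
    proof
      fix x assume xS: "x \<in> S"
      define Z where "Z = {i. x$i \<noteq> 0}"
      define Fam where "Fam = {A. A \<subseteq> Z \<and> Lset A \<subseteq> S}"
      have ZF: "Z \<in> Fam"
      proof -
        have "Lset Z \<subseteq> S"
        proof
          fix y assume "y \<in> Lset Z"
          then have yz: "y$i \<noteq> 0 \<longleftrightarrow> x$i \<noteq> 0" for i by (auto simp: Lset_iff Z_def)
          have "y \<in> X" using xS SX yz by (auto simp: Xiff)
          then show "y \<in> S" using up[OF xS] yz by blast
        qed
        then show ?thesis by (simp add: Fam_def)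
      qed
      define n where "n = (LEAST n. \<exists>A\<in>Fam. card A = n)"
      obtain A where A: "A \<in> Fam" "card A = n"
        using LeastI_ex[of "\<lambda>n. \<exists>A\<in>Fam. card A = n"] ZF by (auto simp: n_def)
      have "A \<in> Amin"
        unfolding Amin_def
      proof (intro CollectI conjI allI impI notI)
        show "Lset A \<subseteq> S" using A by (simp add: Fam_def)
        fix A' assume "A' \<subset> A" "Lset A' \<subseteq> S"
        then have "A' \<in> Fam" using A by (auto simp: Fam_def)
        moreover have "card A' < n" using \<open>A' \<subset> A\<close> A psubset_card_mono[of A A'] by simp
        ultimately show False using not_less_Least[of "card A'" "\<lambda>n. \<exists>A\<in>Fam. card A = n"]
          by (auto simp: n_def)
      qed
      moreover have "x \<in> Dset A" using A by (auto simp: Fam_def Z_def Dset_iff)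
      ultimately show "x \<in> X \<inter> (\<Union>A\<in>Amin. Dset A)" using xS SX by auto
    qed
  next
    show "X \<inter> (\<Union>A\<in>Amin. Dset A) \<subseteq> S"
    proof
      fix x assume "x \<in> X \<inter> (\<Union>A\<in>Amin. Dset A)"
      then obtain A where xX: "x \<in> X" and A: "A \<in> Amin" "x \<in> Dset A" by auto
      have "indv A \<in> S" using A indv_L by (auto simp: Amin_def)
      moreover have "indv A $ i \<noteq> 0 \<Longrightarrow> x$i \<noteq> 0" for i using A by (auto simp: indv_def Dset_iff split: if_splits)
      ultimately show "x \<in> S" using up xX by blast
    qed
  qed
  have openD: "open (Dset A)" for A
    unfolding Dset_def by (intro open_Collect_neq continuous_intros)
  have P3: "openin (top_of_set X) S"
    unfolding openin_open using P1 openD by (intro exI[of _ "\<Union>A\<in>Amin. Dset A"]) auto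
  have P4: "\<exists>\<V>. finite \<V> \<and> (\<forall>W\<in>\<V>. \<exists>T. W = Vset T) \<and> S = X - \<Union>\<V>"
  proof (intro exI conjI)
    define V where "V = Vset ` {T. Vset T \<inter> S = {}}"
    show "finite V" by (simp add: V_def)
    show "\<forall>W\<in>V. \<exists>T. W = Vset T" by (auto simp: V_def)
    show "S = X - \<Union>V"
    proof
      show "S \<subseteq> X - \<Union>V" using SX by (auto simp: V_def)
      show "X - \<Union>V \<subseteq> S"
      proof
        fix x assume x: "x \<in> X - \<Union>V"
        define T where "T = {i. x$i = 0}"
        have "x \<in> Vset T" by (simp add: T_def Vset_def)
        then have "Vset T \<inter> S \<noteq> {}" using x by (auto simp: V_def)
        then obtain y where y: "y \<in> Vset T" "y \<in> S" by auto
        have "y$i \<noteq> 0 \<Longrightarrow> x$i \<noteq> 0" for i using y(1) by (auto simp: Vset_def T_def)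
        then show "x \<in> S" using up[OF y(2)] x by blast
      qed
    qed
  qed
  define p :: "complex^'n" where "p = (\<chi> i. if i \<in> M then 1 else 0)"
  have P5: "connected S"
  proof -
    have eq: "S = \<Union>((\<lambda>A. X \<inter> Dset A) ` Amin)" using P1 by auto
    have conn: "connected (X \<inter> Dset A)" if "A \<in> Amin" for A
    proof -
      define \<Phi> :: "complex^'n \<Rightarrow> complex^'n" where
        "\<Phi> z = (\<chi> i. if i \<notin> M then 0 else if i \<in> A then exp (z$i) else z$i)" for z
      have "continuous_on UNIV \<Phi>" unfolding \<Phi>_def
      proof (intro continuous_on_vec_lambda)
        fix i
        show "continuous_on UNIV (\<lambda>z::complex^'n. if i \<notin> M then 0 else if i \<in> A then exp (z$i) else z$i)"
          by (cases "i \<in> M"; cases "i \<in> A") (auto intro!: continuous_intros)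
      qed
      then have "connected (\<Phi> ` UNIV)" by (intro connected_continuous_image) auto
      moreover have "\<Phi> ` UNIV = X \<inter> Dset A"
      proof
        show "\<Phi> ` UNIV \<subseteq> X \<inter> Dset A" using AM[OF that] by (auto simp: \<Phi>_def Xiff Dset_iff)
        show "X \<inter> Dset A \<subseteq> \<Phi> ` UNIV"
        proof
          fix y assume y: "y \<in> X \<inter> Dset A"
          define z where "z = (\<chi> i. if i \<in> A then Ln (y$i) else y$i)"
          have "\<Phi> z = y" using y AM[OF that] by (auto simp: \<Phi>_def z_def vec_eq_iff Xiff Dset_iff)
          then show "y \<in> \<Phi> ` UNIV" by blast
        qed
      qed
      ultimately show ?thesis by simp
    qed
    show ?thesis
    proof (cases "Amin = {}")
      case True then show ?thesis using eq by simp
    next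
      case False
      have "p \<in> \<Inter>((\<lambda>A. X \<inter> Dset A) ` Amin)"
        using AM by (auto simp: p_def Xiff Dset_iff)
      then have "\<Inter>((\<lambda>A. X \<inter> Dset A) ` Amin) \<noteq> {}" by blast
      then show ?thesis unfolding eq using conn by (intro connected_Union) auto
    qed
  qed
  have P6: "closure S = X"
  proof
    have "closed X" unfolding XV Vset_def Ball_def
      by (intro closed_Collect_all closed_Collect_imp open_Collect_const closed_Collect_eq continuous_intros)
    then show "closure S \<subseteq> X" using SX by (simp add: closure_minimal)
    show "X \<subseteq> closure S"
    proof
      fix x assume xX: "x \<in> X"
      obtain A where A: "A \<in> Amin" using x0 P1 by auto
      show "x \<in> closure S"
        unfolding closure_approachable
      proof (intro allI impI)
        fix e :: real assume e: "e > 0"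
        define d where "d = e / (norm p + 1)"
        have np: "norm p + 1 > 0" by (simp add: add_nonneg_pos)
        have d: "d > 0" using e np by (simp add: d_def)
        have fin: "finite ((\<lambda>i. - Re (x$i)) ` UNIV)" by simp
        have "infinite {0<..<d}" using d by simp
        then obtain t where t: "t \<in> {0<..<d}" "t \<notin> (\<lambda>i. - Re (x$i)) ` UNIV"
          using fin by (metis finite_subset subsetI)
        define y where "y = x + t *\<^sub>R p"
        have yi: "y$i = x$i + (if i \<in> M then of_real t else 0)" for i
          by (simp add: y_def p_def of_real_def)
        have "y \<in> X" using xX by (auto simp: Xiff yi split: if_splits)
        moreover have "y \<in> Dset A"
        proof -
          have "x$i + of_real t \<noteq> 0" for i
          proof
            assume "x$i + of_real t = 0"
            then have "Re (x$i + of_real t) = 0" by simp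
            then have "Re (x$i) + t = 0" by simp
            then have "t = - Re (x$i)" by simp
            then show False using t(2) by auto
          qed
          then show ?thesis using AM[OF A] by (auto simp: Dset_iff yi)
        qed
        ultimately have yS: "y \<in> S" using P1 A by auto
        have "dist y x = t * norm p" using t by (simp add: y_def dist_norm)
        also have "\<dots> \<le> d * norm p" using t by (intro mult_right_mono) auto
        also have "\<dots> < e" using e np by (simp add: d_def pos_divide_less_eq)
        finally show "\<exists>y\<in>S. dist y x < e" using yS by blast
      qed
    qed
  qed
  have P0: "S = Vset (UNIV - M) \<inter> (\<Union>A\<in>Amin. Dset A)" using P1 XV by simp
  show ?thesis
    unfolding Let_def M_def[symmetric] S_def[symmetric] X_def[symmetric]
    unfolding Amin_def[symmetric]
    using P0 P1 P3 P4 P5 P6 by blast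
qed

end
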